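(* Let $m$ be a bounded generating sequence. There is a constant $c$ depending only on $m$ such that the following holds. Let $N\ge1$, $0\le k\le N-1$, $k+1\le l\le N$, and $x\in I_N^{k,l}$. Then for every integer $n\ge M_N$, $$\int_{I_N}|K_n(x-t)|\,d\mu(t)\le \frac{c\,M_lM_k}{M_N^2}.$$
   Context: Let $m=(m_0,m_1,\dots)$ be a sequence of integers $m_k\ge 2$ with $\sup_k m_k<\infty$. $G_m=\prod_k Z_{m_k}$ (where $Z_{m_k}=\{0,\dots,m_k-1\}$ is the group of integers mod $m_k$) with coordinatewise addition mod $m_k$, elements $x=(x_0,x_1,\dots)$, and normalized Haar measure $\mu$ (product of uniform measures). $M_0=1$, $M_{k+1}=m_kM_k$; every $n\in\mathbb{N}$ is uniquely $n=\sum_jn_jM_j$, $n_j\in Z_{m_j}$. $I_N=\{y\in G_m: y_0=\dots=y_{N-1}=0\}$. $r_k(x)=\exp(2\pi ix_k/m_k)$, $\psi_n=\prod_kr_k^{n_k}$, $D_n=\sum_{k=0}^{n-1}\psi_k$, and the Fejér kernel is $K_n=\frac1n\sum_{k=0}^{n-1}D_k$ ($n\ge1$). For $0\le k<l<N$, $I_N^{k,l}$ denotes the set of $x\in G_m$ with $x_0=\dots=x_{k-1}=0$, $x_k\ne0$, $x_{k+1}=\dots=x_{l-1}=0$, $x_l\ne0$, and $x_j$ arbitrary for $j>l$. For $0\le k<N$, $I_N^{k,N}$ denotes the set of $x\in G_m$ with $x_0=\dots=x_{k-1}=0$, $x_k\ne0$, $x_{k+1}=\dots=x_{N-1}=0$,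 and $x_j$ arbitrary for $j\ge N$. *)

theory Defs
  imports "HOL-Probability.Probability"
begin

text \<open>A sequence m is encoded as m :: nat => nat; elements of G_m as functions nat => nat
  with x k < m k for all k.\<close>

definition bounded_gen_seq :: "(nat \<Rightarrow> nat) \<Rightarrow> bool" where
  "bounded_gen_seq m \<longleftrightarrow> (\<forall>k. m k \<ge> 2) \<and> bdd_above (range m)"

definition Gm :: "(nat \<Rightarrow> nat) \<Rightarrow> (nat \<Rightarrow> nat) set" where
  "Gm m = PiE UNIV (\<lambda>k. {..<m k})"

definition haar :: "(nat \<Rightarrow> nat) \<Rightarrow> (nat \<Rightarrow> nat) measure" where
  "haar m = PiM UNIV (\<lambda>k. uniform_count_measure {..<m k})"

definition Mseq :: "(nat \<Rightarrow> nat) \<Rightarrow> nat \<Rightarrow> nat" where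
  "Mseq m k = (\<Prod>j<k. m j)"

definition digit :: "(nat \<Rightarrow> nat) \<Rightarrow> nat \<Rightarrow> nat \<Rightarrow> nat" where
  "digit m n j = (n div Mseq m j) mod m j"

definition gsub :: "(nat \<Rightarrow> nat) \<Rightarrow> (nat \<Rightarrow> nat) \<Rightarrow> (nat \<Rightarrow> nat) \<Rightarrow> (nat \<Rightarrow> nat)" where
  "gsub m x t = (\<lambda>k. (x k + m k - t k) mod m k)"

definition rchar :: "(nat \<Rightarrow> nat) \<Rightarrow> nat \<Rightarrow> (nat \<Rightarrow> nat) \<Rightarrow> complex" where
  "rchar m k x = cis (2 * pi * real (x k) / real (m k))"

text \<open>psi_n = prod_k r_k^{n_k}; all factors with k >= n+1 are 1 since n_k = 0 there.\<close>
definition psi :: "(nat \<Rightarrow> nat) \<Rightarrow> nat \<Rightarrow> (nat \<Rightarrow> nat) \<Rightarrow> complex" where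
  "psi m n x = (\<Prod>k<Suc n. rchar m k x ^ digit m n k)"

definition dirichlet :: "(nat \<Rightarrow> nat) \<Rightarrow> nat \<Rightarrow> (nat \<Rightarrow> nat) \<Rightarrow> complex" where
  "dirichlet m n x = (\<Sum>k<n. psi m k x)"

definition fejer :: "(nat \<Rightarrow> nat) \<Rightarrow> nat \<Rightarrow> (nat \<Rightarrow> nat) \<Rightarrow> complex" where
  "fejer m n x = (\<Sum>k<n. dirichlet m k x) / of_nat n"

definition IN :: "(nat \<Rightarrow> nat) \<Rightarrow> nat \<Rightarrow> (nat \<Rightarrow> nat) set" where
  "IN m N = {y \<in> Gm m. \<forall>j<N. y j = 0}"

text \<open>I_N^{k,l}; for l = N the condition on x_l is dropped (arbitrary for j >= N).\<close>
definition INkl :: "(nat \<Rightarrow> nat) \<Rightarrow> nat \<Rightarrow> nat \<Rightarrow> nat \<Rightarrow> (nat \<Rightarrow> nat) set" where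
  "INkl m N k l = {x \<in> Gm m. (\<forall>j<k. x j = 0) \<and> x k \<noteq> 0 \<and> (\<forall>j. k < j \<and> j < l \<longrightarrow> x j = 0)
      \<and> (l < N \<longrightarrow> x l \<noteq> 0)}"

end

theory Submission
  imports Defs
begin


lemma pos_m: "bounded_gen_seq m \<Longrightarrow> 0 < m k"
  unfolding bounded_gen_seq_def by (metis less_le_trans zero_less_numeral)

lemma ucm_prob: "bounded_gen_seq m \<Longrightarrow> prob_space (uniform_count_measure {..<m k})"
  using pos_m by (intro prob_space_uniform_count_measure) auto

lemma pps: "bounded_gen_seq m \<Longrightarrow> product_prob_space (\<lambda>k. uniform_count_measure {..<m k})"
  unfolding product_prob_space_def product_sigma_finite_def product_prob_space_axioms_def
  using ucm_prob by (auto simp: prob_space_imp_sigma_finite)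

lemma haar_prob: assumes "bounded_gen_seq m" shows "prob_space (haar m)"
proof -
  interpret product_prob_space "\<lambda>k. uniform_count_measure {..<m k}" UNIV
    by (rule pps[OF assms])
  show ?thesis unfolding haar_def by (rule P.prob_space_axioms)
qed

lemma IN_emb: "bounded_gen_seq m \<Longrightarrow> IN m N = prod_emb UNIV (\<lambda>k. uniform_count_measure {..<m k}) {..<N} (PiE {..<N} (\<lambda>_. {0}))"
  unfolding IN_def Gm_def prod_emb_def
  by (auto simp: space_PiM PiE_iff restrict_def space_uniform_count_measure fun_eq_iff; meson)

lemma measure_IN: assumes "bounded_gen_seq m"
  shows "IN m N \<in> sets (haar m)" "measure (haar m) (IN m N) = 1 / real (Mseq m N)"
proof -
  interpret product_prob_space "\<lambda>k. uniform_count_measure {..<m k}" UNIV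
    by (rule pps[OF assms])
  show "IN m N \<in> sets (haar m)" unfolding haar_def IN_emb[OF assms]
    using pos_m[OF assms] by (intro sets_PiM_I) (auto simp: sets_uniform_count_measure)
  have "measure (haar m) (IN m N) = (\<Prod>i<N. measure (uniform_count_measure {..<m i}) {0})"
    unfolding haar_def IN_emb[OF assms]
    using pos_m[OF assms] by (intro measure_PiM_emb) (auto simp: sets_uniform_count_measure)
  also have "\<dots> = (\<Prod>i<N. 1 / real (m i))"
    using pos_m[OF assms] by (intro prod.cong) (auto simp: measure_uniform_count_measure)
  also have "\<dots> = 1 / real (Mseq m N)" unfolding Mseq_def by (simp add: prod_dividef)
  finally show "measure (haar m) (IN m N) = 1 / real (Mseq m N)" .
qed



lemma rsum0:
  fixes a M :: nat assumes "0 < a" "a < M"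
  shows "(\<Sum>i<M. cis (2 * pi * real a / real M) ^ i) = 0"
proof -
  let ?r = "cis (2 * pi * real a / real M)"
  have e: "real M * (2 * pi * real a / real M) = 2 * pi * real a" using assms by simp
  have "?r ^ M = cis (real M * (2 * pi * real a / real M))" by (rule Complex.DeMoivre)
  also have "\<dots> = cis (2 * pi * real a)" using e by simp
  also have "\<dots> = 1" by (rule cis_multiple_2pi) simp
  finally have r1: "?r ^ M = 1" .
  have "?r \<noteq> 1"
  proof
    assume "?r = 1"
    then have "cos (2 * pi * real a / real M) = 1"
      by (metis Re_complex_of_real cis.sel(1) one_complex.sel(1))
    then obtain n :: int where n: "2 * pi * real a / real M = real_of_int n * 2 * pi"
      using cos_one_2pi_int by blast
    have "real a / real M = (2 * pi * real a / real M) / (2 * pi)" by simp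
    also have "\<dots> = n" unfolding n by simp
    finally have "real a / real M = n" .
    moreover have "0 < real a / real M" "real a / real M < 1" using assms by auto
    ultimately show False by (metis of_int_0_less_iff of_int_less_1_iff not_less zero_less_iff_neq_zero int_one_le_iff_zero_less order_less_irrefl linorder_not_le)
  qed
  then show ?thesis by (simp add: sum_gp_strict r1)
qed

lemma Mseq_Suc: "Mseq m (Suc k) = m k * Mseq m k"
  by (simp add: Mseq_def)

lemma Mseq_0: "Mseq m 0 = 1" by (simp add: Mseq_def)

lemma Mseq_pos: "\<forall>k. 0 < m k \<Longrightarrow> 0 < Mseq m k"
  unfolding Mseq_def by (simp add: prod_pos)

lemma Mseq_split: "p \<le> s \<Longrightarrow> Mseq m s = Mseq m p * (\<Prod>j\<in>{p..<s}. m j)"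
proof (induction s rule: dec_induct)
  case base then show ?case by simp
next
  case (step s)
  then show ?case by (simp add: Mseq_Suc prod.atLeastLessThan_Suc)
qed

lemma Mseq_mono: "\<forall>k. 0 < m k \<Longrightarrow> p \<le> s \<Longrightarrow> Mseq m p \<le> Mseq m s"
  by (metis Mseq_split Mseq_pos dvd_imp_le dvd_triv_left)

lemma Mseq_2pow: "\<forall>k. 2 \<le> m k \<Longrightarrow> 2 ^ k \<le> Mseq m k"
proof (induction k)
  case 0 then show ?case by (simp add: Mseq_0)
next
  case (Suc k)
  then have "2 * 2 ^ k \<le> m k * Mseq m k" by (intro mult_mono) auto
  then show ?case by (simp add: Mseq_Suc)
qed

lemma Mseq_big: assumes "\<forall>k. 2 \<le> m k" shows "n < Mseq m n"
  using Mseq_2pow[OF assms, of n] less_exp[of n] by linarith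

lemma digit_big: "n < Mseq m k \<Longrightarrow> digit m n k = 0"
  by (simp add: digit_def)

lemma digit_add:
  assumes hpos: "\<forall>k. 0 < m k" and b: "b < Mseq m p"
  shows "digit m (a * Mseq m p + b) k = digit m (a * Mseq m p) k + digit m b k"
proof (cases "p \<le> k")
  case True
  define Q where "Q = (\<Prod>j\<in>{p..<k}. m j)"
  have Mk: "Mseq m k = Mseq m p * Q" unfolding Q_def by (rule Mseq_split[OF True])
  have Mp: "0 < Mseq m p" by (rule Mseq_pos[OF hpos])
  have "(a * Mseq m p + b) div Mseq m k = a div Q"
    unfolding Mk div_mult2_eq using Mp b by simp
  moreover have "(a * Mseq m p) div Mseq m k = a div Q"
    unfolding Mk div_mult2_eq using Mp by simp
  moreover have "b div Mseq m k = 0"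
    using b Mseq_mono[OF hpos True] by simp
  ultimately show ?thesis by (simp add: digit_def)
next
  case False
  define R where "R = (\<Prod>j\<in>{Suc k..<p}. m j)"
  have Mp: "Mseq m p = Mseq m k * (m k * R)"
    using Mseq_split[of k p m] False unfolding R_def
    by (simp add: prod.atLeast_Suc_lessThan)
  have Mk: "0 < Mseq m k" by (rule Mseq_pos[OF hpos])
  have e: "a * Mseq m p + b = b + (a * R * m k) * Mseq m k"
    unfolding Mp by (simp add: ac_simps)
  have "(a * Mseq m p + b) div Mseq m k = b div Mseq m k + (a * R) * m k"
    unfolding e using Mk by simp
  then have 1: "digit m (a * Mseq m p + b) k = digit m b k"
    by (simp add: digit_def)
  have "(a * Mseq m p) div Mseq m k = (a * R) * m k"
    unfolding Mp using Mk by (simp add: ac_simps)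
  then have 2: "digit m (a * Mseq m p) k = 0" by (simp add: digit_def)
  show ?thesis using 1 2 by simp
qed

lemma digit_single:
  assumes hpos: "\<forall>k. 0 < m k" and i: "i < m s"
  shows "digit m (i * Mseq m s) k = (if k = s then i else 0)"
proof -
  have Ms: "0 < Mseq m s" by (rule Mseq_pos[OF hpos])
  consider "k < s" | "k = s" | "s < k" by linarith
  then show ?thesis
  proof cases
    case 1
    define R where "R = (\<Prod>j\<in>{Suc k..<s}. m j)"
    have Mp: "Mseq m s = Mseq m k * (m k * R)"
      using Mseq_split[of k s m] 1 unfolding R_def
      by (simp add: prod.atLeast_Suc_lessThan)
    have Mk: "0 < Mseq m k" by (rule Mseq_pos[OF hpos])
    have "(i * Mseq m s) div Mseq m k = (i * R) * m k"
      unfolding Mp using Mk by (simp add: ac_simps)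
    then show ?thesis using 1 by (simp add: digit_def)
  next
    case 2 then show ?thesis using Ms i by (simp add: digit_def)
  next
    case 3
    have "i * Mseq m s < Mseq m (Suc s)" using i Ms by (simp add: Mseq_Suc)
    also have "\<dots> \<le> Mseq m k" using 3 by (intro Mseq_mono[OF hpos]) simp
    finally show ?thesis using 3 by (simp add: digit_def)
  qed
qed

lemma h2pos: fixes m :: "nat \<Rightarrow> nat" assumes h: "\<forall>k. 2 \<le> m k" shows "\<forall>k. 0 < m k"
proof
  fix k have "2 \<le> m k" using h by blast
  then show "0 < m k" by simp
qed

lemma prod_ext:
  assumes h2: "\<forall>k. 2 \<le> m k" and n: "n < Mseq m K1" and K: "K1 \<le> K2"
  shows "(\<Prod>k<K2. rchar m k x ^ digit m n k) = (\<Prod>k<K1. rchar m k x ^ digit m n k)"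
proof -
  have "\<forall>k\<in>{..<K2} - {..<K1}. rchar m k x ^ digit m n k = 1"
  proof
    fix k assume "k \<in> {..<K2} - {..<K1}"
    then have "K1 \<le> k" by auto
    then have "Mseq m K1 \<le> Mseq m k" by (rule Mseq_mono[OF h2pos[OF h2]])
    then show "rchar m k x ^ digit m n k = 1" using n by (simp add: digit_big)
  qed
  then show ?thesis using K by (intro prod.mono_neutral_right) auto
qed


lemma psi_eq:
  assumes h2: "\<forall>k. 2 \<le> m k" and n: "n < Mseq m K"
  shows "psi m n x = (\<Prod>k<K. rchar m k x ^ digit m n k)"
proof -
  have n1: "n < Mseq m (Suc n)"
    using Mseq_big[OF h2, of n] Mseq_mono[OF h2pos[OF h2], of n "Suc n"] by simp
  have "psi m n x = (\<Prod>k<max K (Suc n). rchar m k x ^ digit m n k)"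
    unfolding psi_def by (rule prod_ext[OF h2 n1, symmetric]) simp
  also have "\<dots> = (\<Prod>k<K. rchar m k x ^ digit m n k)"
    by (rule prod_ext[OF h2 n]) simp
  finally show ?thesis .
qed

lemma psi_add:
  assumes h2: "\<forall>k. 2 \<le> m k" and b: "b < Mseq m p"
  shows "psi m (a * Mseq m p + b) x = psi m (a * Mseq m p) x * psi m b x"
proof -
  let ?K = "a * Mseq m p + b"
  have big: "?K < Mseq m ?K" by (rule Mseq_big[OF h2])
  have "psi m ?K x = (\<Prod>k<?K. rchar m k x ^ digit m ?K k)"
    by (rule psi_eq[OF h2 big])
  also have "\<dots> = (\<Prod>k<?K. rchar m k x ^ digit m (a * Mseq m p) k * rchar m k x ^ digit m b k)"
    by (intro prod.cong refl) (simp only: digit_add[OF h2pos[OF h2] b] power_add)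
  also have "\<dots> = (\<Prod>k<?K. rchar m k x ^ digit m (a * Mseq m p) k) * (\<Prod>k<?K. rchar m k x ^ digit m b k)"
    by (rule prod.distrib)
  also have "\<dots> = psi m (a * Mseq m p) x * psi m b x"
  proof -
    have "a * Mseq m p < Mseq m ?K" "b < Mseq m ?K" using big by auto
    then show ?thesis using psi_eq[OF h2, of "a * Mseq m p" ?K x] psi_eq[OF h2, of b ?K x] by simp
  qed
  finally show ?thesis .
qed

lemma psi_single:
  assumes h2: "\<forall>k. 2 \<le> m k" and i: "i < m s"
  shows "psi m (i * Mseq m s) x = rchar m s x ^ i"
proof -
  have "i * Mseq m s < Mseq m (Suc s)"
    using i Mseq_pos[OF h2pos[OF h2], of s] by (simp add: Mseq_Suc)
  then have "psi m (i * Mseq m s) x = (\<Prod>k<Suc s. rchar m k x ^ digit m (i * Mseq m s) k)"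
    by (rule psi_eq[OF h2])
  also have "\<dots> = rchar m s x ^ i"
    by (simp add: digit_single[OF h2pos[OF h2] i])
  finally show ?thesis .
qed

lemma norm_psi: "norm (psi m n x) = 1"
  unfolding psi_def prod_norm[symmetric] by (simp add: norm_power rchar_def)


lemma sum_split_nat:
  fixes f :: "nat \<Rightarrow> 'a::comm_monoid_add"
  shows "(\<Sum>j<a+b. f j) = (\<Sum>j<a. f j) + (\<Sum>e<b. f (a+e))"
  by (induction b) (simp_all add: add.assoc)

lemma sum_blocks:
  fixes f :: "nat \<Rightarrow> 'a::comm_monoid_add"
  shows "(\<Sum>j<c*P. f j) = (\<Sum>i<c. \<Sum>e<P. f (i*P+e))"
proof (induction c)
  case 0 then show ?case by simp
next
  case (Suc c)
  have "(\<Sum>j<Suc c*P. f j) = (\<Sum>j<c*P + P. f j)" by (simp add: add.commute)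
  also have "\<dots> = (\<Sum>j<c*P. f j) + (\<Sum>e<P. f (c*P+e))" by (rule sum_split_nat)
  finally show ?case using Suc by simp
qed

lemma rchar_sum0:
  assumes "0 < u s" "u s < m s"
  shows "(\<Sum>i<m s. rchar m s u ^ i) = 0"
  unfolding rchar_def using rsum0[OF assms] .

lemma block0:
  assumes h2: "\<forall>k. 2 \<le> m k" and us: "0 < u s" "u s < m s" and ps: "p \<le> s"
  shows "(\<Sum>a<m s * (\<Prod>j\<in>{p..<s}. m j). psi m (a * Mseq m p) u) = 0"
proof -
  define Q0 where "Q0 = (\<Prod>j\<in>{p..<s}. m j)"
  have Ms: "Mseq m s = Mseq m p * Q0" unfolding Q0_def by (rule Mseq_split[OF ps])
  have Mp: "0 < Mseq m p" by (rule Mseq_pos[OF h2pos[OF h2]])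
  have "(\<Sum>a<m s * Q0. psi m (a * Mseq m p) u) = (\<Sum>i<m s. \<Sum>e<Q0. psi m ((i*Q0+e) * Mseq m p) u)"
    by (rule sum_blocks)
  also have "\<dots> = (\<Sum>i<m s. \<Sum>e<Q0. rchar m s u ^ i * psi m (e * Mseq m p) u)"
  proof (intro sum.cong refl)
    fix i e assume i: "i \<in> {..<m s}" and e: "e \<in> {..<Q0}"
    have eq: "(i*Q0+e) * Mseq m p = i * Mseq m s + e * Mseq m p" unfolding Ms by (simp add: algebra_simps)
    have "e * Mseq m p < Mseq m s" unfolding Ms using e Mp by simp
    then show "psi m ((i*Q0+e) * Mseq m p) u = rchar m s u ^ i * psi m (e * Mseq m p) u"
      unfolding eq psi_add[OF h2 \<open>e * Mseq m p < Mseq m s\<close>] using psi_single[OF h2, of i s u] i by simp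
  qed
  also have "\<dots> = (\<Sum>i<m s. rchar m s u ^ i) * (\<Sum>e<Q0. psi m (e * Mseq m p) u)"
    by (simp add: sum_distrib_left sum_distrib_right sum.swap[of _ "{..<m s}"])
  also have "\<dots> = 0" using rchar_sum0[of u s m, OF us] by simp
  finally show ?thesis unfolding Q0_def .
qed

lemma block0c:
  assumes h2: "\<forall>k. 2 \<le> m k" and us: "0 < u s" "u s < m s" and ps: "p \<le> s"
  shows "(\<Sum>a<c * (\<Prod>j\<in>{p..<Suc s}. m j). psi m (a * Mseq m p) u) = 0"
proof -
  define L where "L = (\<Prod>j\<in>{p..<Suc s}. m j)"
  have L': "L = m s * (\<Prod>j\<in>{p..<s}. m j)" unfolding L_def using ps
    by (simp add: prod.atLeastLessThan_Suc)
  have Ms: "Mseq m (Suc s) = Mseq m p * L" unfolding L_def by (rule Mseq_split) (use ps in simp)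
  have Mp: "0 < Mseq m p" by (rule Mseq_pos[OF h2pos[OF h2]])
  have "(\<Sum>a<c * L. psi m (a * Mseq m p) u) = (\<Sum>i<c. \<Sum>e<L. psi m ((i*L+e) * Mseq m p) u)"
    by (rule sum_blocks)
  also have "\<dots> = (\<Sum>i<c. psi m (i * Mseq m (Suc s)) u * (\<Sum>e<L. psi m (e * Mseq m p) u))"
    unfolding sum_distrib_left
  proof (intro sum.cong refl)
    fix i e assume e: "e \<in> {..<L}"
    have eq: "(i*L+e) * Mseq m p = i * Mseq m (Suc s) + e * Mseq m p" unfolding Ms by (simp add: algebra_simps)
    have "e * Mseq m p < Mseq m (Suc s)" unfolding Ms using e Mp by simp
    then show "psi m ((i*L+e) * Mseq m p) u = psi m (i * Mseq m (Suc s)) u * psi m (e * Mseq m p) u"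
      unfolding eq by (rule psi_add[OF h2])
  qed
  also have "\<dots> = 0" unfolding L' block0[where u=u and s=s and m=m and p=p, OF h2 us ps] by simp
  finally show ?thesis unfolding L_def .
qed

lemma wbound:
  assumes h2: "\<forall>k. 2 \<le> m k" and us: "0 < u s" "u s < m s" and ps: "p \<le> s"
  shows "norm (\<Sum>a<Q. psi m (a * Mseq m p) u) \<le> real (\<Prod>j\<in>{p..<Suc s}. m j)"
proof -
  define L where "L = (\<Prod>j\<in>{p..<Suc s}. m j)"
  have Lpos: "0 < L" unfolding L_def using h2pos[OF h2] by (simp add: prod_pos)
  have Q: "Q = (Q div L) * L + Q mod L" by simp
  have "(\<Sum>a<Q. psi m (a * Mseq m p) u) = (\<Sum>a<(Q div L) * L + Q mod L. psi m (a * Mseq m p) u)"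
    using Q by simp
  also have "\<dots> = (\<Sum>e<Q mod L. psi m (((Q div L) * L + e) * Mseq m p) u)"
    unfolding sum_split_nat using block0c[where u=u and s=s and m=m and p=p and c="Q div L", OF h2 us ps] unfolding L_def by simp
  finally have "norm (\<Sum>a<Q. psi m (a * Mseq m p) u) \<le> (\<Sum>e<Q mod L. norm (psi m (((Q div L) * L + e) * Mseq m p) u))"
    by (simp add: norm_sum)
  also have "\<dots> = real (Q mod L)" by (simp add: norm_psi)
  also have "\<dots> \<le> real L" using Lpos by simp
  finally show ?thesis unfolding L_def .
qed

lemma dir_zero:
  assumes h2: "\<forall>k. 2 \<le> m k" and us: "0 < u s" "u s < m s" and sp: "s < p"
  shows "dirichlet m (Mseq m p) u = 0"
proof -
  have "Mseq m p = Mseq m (Suc s) * (\<Prod>j\<in>{Suc s..<p}. m j)"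
    by (rule Mseq_split) (use sp in simp)
  also have "Mseq m (Suc s) = (\<Prod>j\<in>{0..<Suc s}. m j)"
    by (simp add: Mseq_def atLeast0LessThan)
  finally have e: "Mseq m p = (\<Prod>j\<in>{Suc s..<p}. m j) * (\<Prod>j\<in>{0..<Suc s}. m j)" by simp
  show ?thesis unfolding dirichlet_def e using block0c[where u=u and s=s and m=m and p=0 and c="(\<Prod>j\<in>{Suc s..<p}. m j)", OF h2 us] by (simp add: Mseq_0)
qed


lemma dir_block:
  assumes h2: "\<forall>k. 2 \<le> m k" and e: "e < Mseq m p"
  shows "dirichlet m (a * Mseq m p + e) u
    = (\<Sum>i<a. psi m (i * Mseq m p) u) * dirichlet m (Mseq m p) u + psi m (a * Mseq m p) u * dirichlet m e u"
proof -
  have "(\<Sum>j<a * Mseq m p. psi m j u) = (\<Sum>i<a. \<Sum>e<Mseq m p. psi m (i * Mseq m p + e) u)"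
    by (rule sum_blocks)
  also have "\<dots> = (\<Sum>i<a. psi m (i * Mseq m p) u * dirichlet m (Mseq m p) u)"
    by (intro sum.cong refl) (simp add: dirichlet_def sum_distrib_left psi_add[OF h2])
  finally have 1: "(\<Sum>j<a * Mseq m p. psi m j u) = (\<Sum>i<a. psi m (i * Mseq m p) u) * dirichlet m (Mseq m p) u"
    by (simp add: sum_distrib_right)
  have 2: "(\<Sum>i<e. psi m (a * Mseq m p + i) u) = psi m (a * Mseq m p) u * dirichlet m e u"
    unfolding dirichlet_def sum_distrib_left
    by (intro sum.cong refl) (use e in \<open>simp add: psi_add[OF h2]\<close>)
  show ?thesis unfolding dirichlet_def[of m "a * Mseq m p + e"] sum_split_nat 1 2 ..
qed

definition fsum :: "(nat \<Rightarrow> nat) \<Rightarrow> nat \<Rightarrow> (nat \<Rightarrow> nat) \<Rightarrow> complex" where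
  "fsum m n u = (\<Sum>j<n. dirichlet m j u)"

lemma fsum_block:
  assumes h2: "\<forall>k. 2 \<le> m k" and D0: "dirichlet m (Mseq m p) u = 0" and R: "R < Mseq m p"
  shows "fsum m (a * Mseq m p + R) u
    = (\<Sum>i<a. psi m (i * Mseq m p) u) * fsum m (Mseq m p) u + psi m (a * Mseq m p) u * fsum m R u"
proof -
  have d: "dirichlet m (i * Mseq m p + e) u = psi m (i * Mseq m p) u * dirichlet m e u" if "e < Mseq m p" for i e
    using dir_block[OF h2 that, of i u] D0 by simp
  have "(\<Sum>j<a * Mseq m p. dirichlet m j u) = (\<Sum>i<a. \<Sum>e<Mseq m p. dirichlet m (i * Mseq m p + e) u)"
    by (rule sum_blocks)
  also have "\<dots> = (\<Sum>i<a. psi m (i * Mseq m p) u * fsum m (Mseq m p) u)"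
    by (intro sum.cong refl) (simp add: fsum_def sum_distrib_left d)
  finally have 1: "(\<Sum>j<a * Mseq m p. dirichlet m j u) = (\<Sum>i<a. psi m (i * Mseq m p) u) * fsum m (Mseq m p) u"
    by (simp add: sum_distrib_right)
  have 2: "(\<Sum>i<R. dirichlet m (a * Mseq m p + i) u) = psi m (a * Mseq m p) u * fsum m R u"
    unfolding fsum_def sum_distrib_left
    by (intro sum.cong refl) (use R in \<open>simp add: d\<close>)
  show ?thesis unfolding fsum_def[of m "a * Mseq m p + R"] sum_split_nat 1 2 ..
qed

lemma norm_dir: "norm (dirichlet m n u) \<le> real n"
proof -
  have "norm (dirichlet m n u) \<le> (\<Sum>j<n. norm (psi m j u))" unfolding dirichlet_def by (rule norm_sum)
  then show ?thesis by (simp add: norm_psi)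
qed

lemma norm_fsum: "norm (fsum m n u) \<le> real n * real n"
proof -
  have "norm (fsum m n u) \<le> (\<Sum>j<n. norm (dirichlet m j u))" unfolding fsum_def by (rule norm_sum)
  also have "\<dots> \<le> (\<Sum>j<n. real n)" by (intro sum_mono order.trans[OF norm_dir]) simp
  finally show ?thesis by simp
qed

lemma norm_psisum: "norm (\<Sum>a<Q. psi m (f a) u) \<le> real Q"
proof -
  have "norm (\<Sum>a<Q. psi m (f a) u) \<le> (\<Sum>a<Q. norm (psi m (f a) u))" by (rule norm_sum)
  then show ?thesis by (simp add: norm_psi)
qed


lemma fsum_bound:
  assumes h2: "\<forall>k. 2 \<le> m k" and hB: "\<forall>k. m k \<le> B"
    and kl: "k < l" "l \<le> N" and uk: "0 < u k" "u k < m k"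
    and ul: "l < N \<Longrightarrow> 0 < u l \<and> u l < m l"
    and R: "R \<le> Mseq m N"
  shows "norm (fsum m R u) \<le> real (B*B + B) * real (Mseq m l) * real (Mseq m k)"
proof -
  have hpos: "\<forall>k. 0 < m k" by (rule h2pos[OF h2])
  define P where "P = Mseq m (Suc k)"
  have Ppos: "0 < P" unfolding P_def by (rule Mseq_pos[OF hpos])
  have D0: "dirichlet m P u = 0" unfolding P_def by (rule dir_zero[where u=u and s=k and m=m, OF h2 uk]) simp
  define c where "c = R div P"
  define R' where "R' = R mod P"
  have Rdec: "R = c * P + R'" unfolding c_def R'_def by simp
  have R'P: "R' < P" unfolding R'_def using Ppos by simp
  define W where "W = (\<Sum>i<c. psi m (i * P) u)"
  have fe: "fsum m R u = W * fsum m P u + psi m (c * P) u * fsum m R' u"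
    unfolding Rdec W_def P_def by (rule fsum_block[OF h2 D0[unfolded P_def] R'P[unfolded P_def]])
  have "norm (fsum m R u) \<le> norm W * norm (fsum m P u) + norm (fsum m R' u)"
    unfolding fe by (rule order.trans[OF norm_triangle_ineq]) (simp add: norm_mult norm_psi)
  also have "\<dots> \<le> norm W * (real P * real P) + real P * real P"
  proof (intro add_mono mult_left_mono norm_fsum)
    have "real R' * real R' \<le> real P * real P" using R'P by (intro mult_mono) auto
    then show "norm (fsum m R' u) \<le> real P * real P" using norm_fsum[of m R' u] by linarith
  qed auto
  finally have f1: "norm (fsum m R u) \<le> norm W * real P * real P + real P * real P"
    by (simp add: mult.assoc)
  have B1: "1 \<le> B" using h2 hB by (metis le_trans one_le_numeral)
  have wP: "norm W * real P \<le> real B * real (Mseq m l)"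
  proof (cases "l < N")
    case True
    note ul' = ul[OF True]
    have "norm W \<le> real (\<Prod>j\<in>{Suc k..<Suc l}. m j)"
      unfolding W_def P_def using ul' kl by (intro wbound[OF h2]) auto
    then have "norm W * real P \<le> real (\<Prod>j\<in>{Suc k..<Suc l}. m j) * real P"
      by (intro mult_right_mono) auto
    also have "\<dots> = real (Mseq m (Suc l))"
      unfolding P_def using Mseq_split[of "Suc k" "Suc l" m] kl by (simp add: mult.commute)
    also have "\<dots> \<le> real B * real (Mseq m l)"
      using hB by (simp add: Mseq_Suc mult_right_mono del: of_nat_mult flip: of_nat_mult)
    finally show ?thesis .
  next
    case False
    then have lN: "l = N" using kl by simp
    have "norm W \<le> real c" unfolding W_def by (rule norm_psisum)
    then have "norm W * real P \<le> real c * real P" by (intro mult_right_mono) auto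
    also have "real c * real P \<le> real R" using Rdec by (simp flip: of_nat_mult)
    also have "\<dots> \<le> real (Mseq m l)" using R lN by simp
    also have "\<dots> \<le> real B * real (Mseq m l)" using B1 mult_right_mono[of 1 "real B" "real (Mseq m l)"] by simp
    finally show ?thesis .
  qed
  have PB: "real P \<le> real B * real (Mseq m k)"
    using hB by (simp add: P_def Mseq_Suc mult_right_mono del: of_nat_mult flip: of_nat_mult)
  have Pl: "real P \<le> real (Mseq m l)" unfolding P_def using kl by (simp add: Mseq_mono[OF hpos])
  have "norm W * real P * real P \<le> real B * real (Mseq m l) * real P"
    using wP by (intro mult_right_mono) auto
  also have "\<dots> \<le> real B * real (Mseq m l) * (real B * real (Mseq m k))"
    using PB by (intro mult_left_mono) auto
  finally have t1: "norm W * real P * real P \<le> real B * real B * real (Mseq m l) * real (Mseq m k)"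
    by (simp add: ac_simps)
  have "real P * real P \<le> real (Mseq m l) * (real B * real (Mseq m k))"
    using Pl PB by (intro mult_mono) auto
  then have t2: "real P * real P \<le> real B * real (Mseq m l) * real (Mseq m k)" by (simp add: ac_simps)
  show ?thesis using f1 t1 t2 by (simp add: algebra_simps)
qed


lemma fejer_bound:
  assumes h2: "\<forall>k. 2 \<le> m k" and hB: "\<forall>k. m k \<le> B"
    and kl: "k < l" "l \<le> N" and uk: "0 < u k" "u k < m k"
    and ul: "l < N \<Longrightarrow> 0 < u l \<and> u l < m l"
    and n: "Mseq m N \<le> n"
  shows "norm (fejer m n u) \<le> 2 * (real (B*B + B) * real (Mseq m l) * real (Mseq m k)) / real (Mseq m N)"
proof -
  have hpos: "\<forall>k. 0 < m k" by (rule h2pos[OF h2])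
  define A where "A = real (B*B + B) * real (Mseq m l) * real (Mseq m k)"
  define P where "P = Mseq m N"
  have Ppos: "0 < P" unfolding P_def by (rule Mseq_pos[OF hpos])
  have D0: "dirichlet m P u = 0" unfolding P_def
    by (rule dir_zero[where u=u and s=k and m=m, OF h2 uk]) (use kl in simp)
  define q where "q = n div P"
  define r where "r = n mod P"
  have ndec: "n = q * P + r" unfolding q_def r_def by simp
  have rP: "r < P" unfolding r_def using Ppos by simp
  have q1: "1 \<le> q" unfolding q_def using n Ppos P_def by (simp add: div_greater_zero_iff Suc_le_eq)
  define W where "W = (\<Sum>i<q. psi m (i * P) u)"
  have fe: "fsum m n u = W * fsum m P u + psi m (q * P) u * fsum m r u"
    unfolding ndec W_def P_def by (rule fsum_block[OF h2 D0[unfolded P_def] rP[unfolded P_def]])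
  have bP: "norm (fsum m P u) \<le> A" unfolding A_def P_def
    by (rule fsum_bound[OF h2 hB kl uk ul]) auto
  have br: "norm (fsum m r u) \<le> A" unfolding A_def
    by (rule fsum_bound[OF h2 hB kl uk ul]) (use rP P_def in auto)
  have W: "norm W \<le> real q" unfolding W_def by (rule norm_psisum)
  have "norm (fsum m n u) \<le> norm W * norm (fsum m P u) + norm (fsum m r u)"
    unfolding fe by (rule order.trans[OF norm_triangle_ineq]) (simp add: norm_mult norm_psi)
  also have "\<dots> \<le> real q * A + A"
    using W bP br by (intro add_mono mult_mono) auto
  finally have f1: "norm (fsum m n u) \<le> (real q + 1) * A" by (simp add: algebra_simps)
  have A0: "0 \<le> A" unfolding A_def by simp
  have npos: "0 < real n" using n Ppos P_def by simp
  have qn: "(real q + 1) * real P \<le> 2 * real n"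
  proof -
    have "(q + 1) * P \<le> 2 * (q * P)" using q1 by simp
    also have "\<dots> \<le> 2 * n" using ndec by simp
    finally have "real ((q + 1) * P) \<le> real (2 * n)" by (simp only: of_nat_le_iff)
    then show ?thesis by (simp add: algebra_simps)
  qed
  have "norm (fejer m n u) = norm (fsum m n u) / real n"
    unfolding fejer_def fsum_def by (simp add: norm_divide)
  also have "\<dots> \<le> (real q + 1) * A / real n"
    using f1 npos by (simp add: divide_right_mono)
  also have "\<dots> \<le> 2 * A / real P"
    using mult_left_mono[OF qn A0] npos Ppos by (simp add: field_simps)
  finally show ?thesis unfolding A_def P_def .
qed


theorem lemma4:
  fixes m :: "nat \<Rightarrow> nat"
  assumes "bounded_gen_seq m"
  shows "\<exists>c::real. \<forall>N k l x n. 1 \<le> N \<longrightarrow> k \<le> N - 1 \<longrightarrow> k + 1 \<le> l \<longrightarrow> l \<le> N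
    \<longrightarrow> x \<in> INkl m N k l \<longrightarrow> n \<ge> Mseq m N \<longrightarrow>
    (\<integral>t\<in>IN m N. cmod (fejer m n (gsub m x t)) \<partial>haar m)
      \<le> c * real (Mseq m l) * real (Mseq m k) / real (Mseq m N) ^ 2"
proof -
  have h2: "\<forall>k. 2 \<le> m k" using assms unfolding bounded_gen_seq_def by blast
  obtain B where hB: "\<forall>k. m k \<le> B" using assms unfolding bounded_gen_seq_def bdd_above_def by blast
  have hpos: "\<forall>k. 0 < m k" by (rule h2pos[OF h2])
  interpret P: prob_space "haar m" by (rule haar_prob[OF assms])
  show ?thesis
  proof (intro exI allI impI)
    fix N k l x n
    assume N1: "1 \<le> N" and kN: "k \<le> N - 1" and kl: "k + 1 \<le> l" and lN: "l \<le> N"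
      and x: "x \<in> INkl m N k l" and n: "Mseq m N \<le> n"
    define A where "A = real (B*B + B) * real (Mseq m l) * real (Mseq m k)"
    define C where "C = 2 * A / real (Mseq m N)"
    have MN: "0 < real (Mseq m N)" using Mseq_pos[OF hpos] by simp
    have C0: "0 \<le> C" unfolding C_def A_def using MN by simp
    have xG: "\<forall>j. x j < m j" using x unfolding INkl_def Gm_def by (auto simp: PiE_iff)
    have kN': "k < N" using kN N1 by simp
    have bound: "cmod (fejer m n (gsub m x t)) \<le> C" if t: "t \<in> IN m N" for t
    proof -
      let ?u = "gsub m x t"
      have tz: "\<forall>j<N. t j = 0" using t unfolding IN_def by auto
      have uj: "?u j = x j" if "j < N" for j
        using tz that xG hpos by (simp add: gsub_def)
      have ulm: "?u j < m j" for j using hpos by (simp add: gsub_def)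
      have uk: "0 < ?u k" "?u k < m k" using x kN' uj[of k] ulm[of k] unfolding INkl_def by auto
      have ul: "0 < ?u l \<and> ?u l < m l" if "l < N" using x that uj[of l] ulm[of l] unfolding INkl_def by auto
      show ?thesis unfolding C_def A_def
        by (rule fejer_bound[OF h2 hB _ lN uk ul n]) (use kl in auto)
    qed
    have INs: "IN m N \<in> sets (haar m)" by (rule measure_IN(1)[OF assms])
    have INf: "emeasure (haar m) (IN m N) < \<infinity>" by (simp add: P.emeasure_eq_measure)
    have "(\<integral>t\<in>IN m N. cmod (fejer m n (gsub m x t)) \<partial>haar m)
        = (\<integral>t. indicator (IN m N) t *\<^sub>R cmod (fejer m n (gsub m x t)) \<partial>haar m)"
      by (simp add: set_lebesgue_integral_def)
    also have "\<dots> \<le> (\<integral>t. indicator (IN m N) t *\<^sub>R C \<partial>haar m)"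
    proof (rule integral_mono')
      show "integrable (haar m) (\<lambda>t. indicator (IN m N) t *\<^sub>R C)"
        using INs INf by (rule integrable_indicator)
      fix t show "indicator (IN m N) t *\<^sub>R cmod (fejer m n (gsub m x t)) \<le> indicator (IN m N) t *\<^sub>R C"
        using bound by (cases "t \<in> IN m N") auto
      show "0 \<le> indicator (IN m N) t *\<^sub>R C" using C0 by simp
    qed
    also have "\<dots> = measure (haar m) (IN m N) *\<^sub>R C"
      by (rule has_bochner_integral_integral_eq[OF has_bochner_integral_indicator[OF INs INf]])
    also have "\<dots> = 2 * real (B*B + B) * real (Mseq m l) * real (Mseq m k) / real (Mseq m N) ^ 2"
      unfolding measure_IN(2)[OF assms] C_def A_def using MN by (simp add: power2_eq_square field_simps)
    finally show "(\<integral>t\<in>IN m N. cmod (fejer m n (gsub m x t)) \<partial>haar m)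
      \<le> 2 * real (B*B + B) * real (Mseq m l) * real (Mseq m k) / real (Mseq m N) ^ 2" .
  qed
qed

end
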